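(* Consider the two-SP bandwidth allocation game with minimum small-cell bandwidth constraints described in the context. This game has a Nash equilibrium, and the Nash equilibrium is unique. Moreover, the total small-cell bandwidth $B_{1,S}+B_{2,S}$ at this equilibrium is at least the total small-cell bandwidth $B_{1,S}^{\mathrm{NE}}+B_{2,S}^{\mathrm{NE}}$ at the Nash equilibrium of the same game without the regulatory constraints.
   Context: Two service providers (SPs) $i=1,2$. SP $i$ owns bandwidth $B_i>0$ and chooses macro-cell bandwidth $B_{i,M}\ge0$ and small-cell bandwidth $B_{i,S}$ with $B_{i,M}+B_{i,S}\le B_i$ and $B_{i,S}\ge B_{i,S}^0$ (regulatory constraint), where $0\le B_{i,S}^0\le B_i$ are given; "without the regulatory constraints" means $B_{i,S}^0=0$. Parameters: $R_0>0$, $\lambda_S>1$, a mass $N_m>0$ of mobile users (served only by macro-cells) and a mass $N_f>0$ of fixed users, each with utility $u(r)=r^{1-\alpha}/(1-\alpha)$, $\alpha\in(0,1)$. SPs set per-unit-rate prices in a second stage after bandwidths are fixed; the second-stage price equilibrium is market-clearing, so that with $R_M=\frac{(B_{1,M}+B_{2,M})R_0}{N_m}$ and $R_S=\frac{\lambda_S(B_{1,S}+B_{2,S})R_0}{N_f}$ the macro and small-cell prices are $u'(R_M)=R_M^{-\alpha}$ and $u'(R_S)=R_S^{-\alpha}$. The payoff of SP $i$ in the bandwidth game is its revenue $S_i=\lambda_SB_{i,S}R_0\,u'(R_S)+B_{i,M}R_0\,u'(R_M)$, and a Nash equilibrium is a pair of feasible allocations in which each SP maximizes $S_i$ given the other's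 allocation. Without the regulatory constraints the unique Nash equilibrium is $B_{i,S}^{\mathrm{NE}}=\frac{N_f\lambda_S^{1/\alpha-1}B_i}{N_f\lambda_S^{1/\alpha-1}+N_m}$, $B_{i,M}^{\mathrm{NE}}=\frac{N_mB_i}{N_f\lambda_S^{1/\alpha-1}+N_m}$, $i=1,2$. *)

theory Defs
  imports Complex_Main
begin

text \<open>Marginal utility u'(r) = r^(-alpha) for u(r) = r^(1-alpha)/(1-alpha).\<close>
definition uprime :: "real \<Rightarrow> real \<Rightarrow> real" where
  "uprime \<alpha> r = r powr (- \<alpha>)"

text \<open>An allocation of an SP is a pair (B_S, B_M) of small-cell and macro-cell bandwidth.
  Feasibility: B_M \<ge> 0, B_S \<ge> B_S^0, B_M + B_S \<le> B.\<close>
definition feasible :: "real \<Rightarrow> real \<Rightarrow> real \<times> real \<Rightarrow> bool" where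
  "feasible B B0 x \<longleftrightarrow> snd x \<ge> 0 \<and> fst x \<ge> B0 \<and> fst x + snd x \<le> B"

definition revenue ::
  "real \<Rightarrow> real \<Rightarrow> real \<Rightarrow> real \<Rightarrow> real \<Rightarrow> real \<times> real \<Rightarrow> real \<times> real \<Rightarrow> real" where
  "revenue R0 lamS Nm Nf \<alpha> x y =
     (let RM = (snd x + snd y) * R0 / Nm;
          RS = lamS * (fst x + fst y) * R0 / Nf
      in lamS * fst x * R0 * uprime \<alpha> RS + snd x * R0 * uprime \<alpha> RM)"

definition is_NE ::
  "real \<Rightarrow> real \<Rightarrow> real \<Rightarrow> real \<Rightarrow> real \<Rightarrow> real \<Rightarrow> real \<Rightarrow> real \<Rightarrow> real
   \<Rightarrow> real \<times> real \<Rightarrow> real \<times> real \<Rightarrow> bool" where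
  "is_NE R0 lamS Nm Nf \<alpha> B1 B2 B10 B20 x1 x2 \<longleftrightarrow>
     feasible B1 B10 x1 \<and> feasible B2 B20 x2 \<and>
     (\<forall>z. feasible B1 B10 z \<longrightarrow> revenue R0 lamS Nm Nf \<alpha> z x2 \<le> revenue R0 lamS Nm Nf \<alpha> x1 x2) \<and>
     (\<forall>z. feasible B2 B20 z \<longrightarrow> revenue R0 lamS Nm Nf \<alpha> z x1 \<le> revenue R0 lamS Nm Nf \<alpha> x2 x1)"

end

theory Submission
  imports Defs "HOL-Analysis.Analysis"
begin

definition Gf :: "real \<Rightarrow> real \<Rightarrow> real \<Rightarrow> real" where
  "Gf a x y = x * (x + y) powr (- a)"
definition Df :: "real \<Rightarrow> real \<Rightarrow> real \<Rightarrow> real" where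
  "Df a x y = (x + y) powr (- a - 1) * ((1 - a) * x + y)"

lemma conc_bern:
  fixes a r :: real
  assumes "0 < a" "a < 1" "r > 0"
  shows "r powr (1 - a) \<le> (1 - a) * r + a"
  using Youngs_inequality_0[of "1-a" a r 1] assms by simp

lemma conv_bern:
  fixes a r :: real
  assumes "0 \<le> a" "r > 0"
  shows "r powr (- a) \<ge> 1 - a * (r - 1)"
proof -
  have "r powr (-a) = exp (- a * ln r)" using assms by (simp add: powr_def)
  also have "\<dots> \<ge> 1 + (- a * ln r)" by (rule exp_ge_add_one_self)
  finally have "r powr (-a) \<ge> 1 - a * ln r" by simp
  moreover have "a * ln r \<le> a * (r - 1)" using assms ln_le_minus_one[of r] mult_left_mono by blast
  ultimately show ?thesis by linarith
qed

lemma G_tangent: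
  assumes a: "0 < a" "a < 1" and x: "x \<ge> 0" "y \<ge> 0" "x0 \<ge> 0" "x0 + y > 0"
  shows "Gf a x y \<le> Gf a x0 y + Df a x0 y * (x - x0)"
proof -
  define T0 where "T0 = x0 + y"
  define p where "p = T0 powr (-a)"
  have T0: "T0 > 0" using x T0_def by simp
  have p: "p > 0" using T0 p_def by simp
  have pm1: "T0 powr (-a - 1) = p / T0" using T0 by (simp add: p_def powr_diff powr_minus field_simps)
  have p1: "T0 powr (1 - a) = T0 * p" using T0 by (simp add: p_def powr_diff powr_minus field_simps)
  have rhs: "Gf a x0 y + Df a x0 y * (x - x0) = p * (a * T0 + (1-a) * (x+y) - y + a * y * ((x+y) - T0) / T0)"
    unfolding Gf_def Df_def T0_def[symmetric] pm1 p_def[symmetric] using T0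
    by (simp add: field_simps T0_def)
  show ?thesis
  proof (cases "x + y = 0")
    case True
    then have "x = 0" "y = 0" using x by auto
    then show ?thesis unfolding rhs using a T0 p by (simp add: Gf_def)
  next
    case False
    define T where "T = x + y"
    have T: "T > 0" using False x T_def by simp
    define r where "r = T / T0"
    have r: "r > 0" using T T0 r_def by simp
    have i: "T powr (1-a) \<le> T0 powr (1-a) * ((1-a) * r + a)"
    proof -
      have "T = T0 * r" using T0 r_def by simp
      then have "T powr (1-a) = T0 powr (1-a) * r powr (1-a)" using T0 r by (simp add: powr_mult)
      then show ?thesis using conc_bern[OF a r] T0 by (simp add: mult_left_mono)
    qed
    have ii: "T powr (-a) \<ge> T0 powr (-a) * (1 - a * (r - 1))"
    proof -
      have "T = T0 * r" using T0 r_def by simp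
      then have "T powr (-a) = T0 powr (-a) * r powr (-a)" using T0 r by (simp add: powr_mult)
      then show ?thesis using conv_bern[of a r] a r T0 by (simp add: mult_left_mono)
    qed
    have G: "Gf a x y = T powr (1-a) - y * T powr (-a)"
      unfolding Gf_def T_def[symmetric] using T
      by (simp add: powr_diff powr_minus field_simps T_def)
    have "Gf a x y \<le> T0 powr (1-a) * ((1-a) * r + a) - y * (T0 powr (-a) * (1 - a * (r - 1)))"
      unfolding G using i ii mult_left_mono[OF ii x(2)] by linarith
    also have "\<dots> = p * (a * T0 + (1-a) * T - y + a * y * (T - T0) / T0)"
      unfolding p1 p_def[symmetric] r_def using T0 by (simp add: field_simps)
    finally show ?thesis unfolding rhs T_def .
  qed
qed

lemma G_strict_mono:
  assumes a: "0 < a" "a < 1" and x: "0 \<le> x" "x < x'" "0 \<le> y"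
  shows "Gf a x y < Gf a x' y"
proof (cases "x = 0")
  case True
  then show ?thesis using x by (simp add: Gf_def)
next
  case False
  then have xp: "x > 0" using x by simp
  define r where "r = (x' + y) / (x + y)"
  have r1: "r > 1" using x xp by (simp add: r_def)
  have "r powr a < r powr 1" using powr_less_mono[OF a(2) r1] .
  then have ra: "r powr a < r" using r1 by simp
  have xr: "x * r \<le> x'" using x xp by (simp add: r_def field_simps mult_right_mono)
  have "x * r powr a < x'" using ra xr xp by (smt (verit) mult_strict_left_mono)
  have e: "(x' + y) powr (-a) = (x + y) powr (-a) / r powr a"
  proof -
    have "x' + y = (x + y) * r" using xp x by (simp add: r_def)
    then show ?thesis using xp x r1 by (simp add: powr_mult powr_minus divide_inverse)
  qed
  have pos: "(x + y) powr (-a) > 0" using xp x by simp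
  have "Gf a x' y = x' / r powr a * (x + y) powr (-a)" unfolding Gf_def e by simp
  moreover have "x < x' / r powr a" using \<open>x * r powr a < x'\<close> r1 by (simp add: field_simps)
  ultimately show ?thesis unfolding Gf_def using pos mult_strict_right_mono by (metis times_divide_eq_left)
qed

lemma G_mono:
  assumes a: "0 < a" "a < 1" and x: "0 \<le> x" "x \<le> x'" "0 \<le> y"
  shows "Gf a x y \<le> Gf a x' y"
  using G_strict_mono[OF a x(1) _ x(3), of x'] x by (cases "x = x'") auto

lemma powr_m1:
  fixes T :: real assumes "T > 0" shows "T powr (-a - 1) = T powr (-a) / T"
  using assms by (simp add: powr_diff)

lemma G_deriv:
  assumes "x0 + y > 0"
  shows "((\<lambda>x. Gf a x y) has_real_derivative Df a x0 y) (at x0)"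
proof -
  have "((\<lambda>x. x * (x + y) powr (-a)) has_real_derivative
     1 * (x0 + y) powr (-a) + x0 * ((-a) * (x0 + y) powr (-a - 1) * 1)) (at x0)"
    by (rule derivative_eq_intros refl | use assms in simp)+
  moreover have "1 * (x0 + y) powr (-a) + x0 * ((-a) * (x0 + y) powr (-a - 1) * 1) = Df a x0 y"
    using assms unfolding Df_def powr_m1[OF assms] by (simp add: field_simps)
  ultimately show ?thesis unfolding Gf_def by simp
qed

definition pay :: "real \<Rightarrow> real \<Rightarrow> real \<Rightarrow> real \<times> real \<Rightarrow> real \<times> real \<Rightarrow> real" where
  "pay a A C x y = A * Gf a (fst x) (fst y) + C * Gf a (snd x) (snd y)"
definition hh :: "real \<Rightarrow> real \<Rightarrow> real \<Rightarrow> real \<times> real \<Rightarrow> real \<times> real \<Rightarrow> real" where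
  "hh a A C x y = A * Df a (fst x) (fst y) - C * Df a (snd x) (snd y)"
definition BRg :: "real \<Rightarrow> real \<Rightarrow> real \<Rightarrow> real \<Rightarrow> real \<Rightarrow> real \<times> real \<Rightarrow> real \<times> real \<Rightarrow> bool" where
  "BRg a A C B B0 x y \<longleftrightarrow> feasible B B0 x \<and> (\<forall>z. feasible B B0 z \<longrightarrow> pay a A C z y \<le> pay a A C x y)"

lemma BR_opt:
  assumes a: "0 < a" "a < 1" and AC: "A > 0" "C > 0" and y: "fst y \<ge> 0" "snd y \<ge> 0" and B0: "B0 \<ge> 0"
    and fx: "feasible B B0 x" and full: "fst x + snd x = B"
    and pS: "fst x + fst y > 0" and pM: "snd x + snd y > 0"
    and k1: "fst x > B0 \<Longrightarrow> hh a A C x y \<ge> 0" and k2: "snd x > 0 \<Longrightarrow> hh a A C x y \<le> 0"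
  shows "BRg a A C B B0 x y"
  unfolding BRg_def
proof (intro conjI allI impI fx)
  fix z assume fz: "feasible B B0 z"
  obtain s m where x: "x = (s, m)" by force
  obtain s' m' where yy: "y = (s', m')" by force
  obtain zs zm where z: "z = (zs, zm)" by force
  note defs = x yy z
  have s: "s \<ge> B0" "m \<ge> 0" using fx x by (auto simp: feasible_def)
  have zz: "zs \<ge> B0" "zm \<ge> 0" "zs + zm \<le> B" using fz z by (auto simp: feasible_def)
  have "Gf a zm m' \<le> Gf a (B - zs) m'" using G_mono[OF a, of zm "B - zs" m'] zz y yy by auto
  have t1: "Gf a zs s' \<le> Gf a s s' + Df a s s' * (zs - s)"
    using G_tangent[OF a, of zs s' s] zz s B0 y pS defs by auto
  have t2: "Gf a (B - zs) m' \<le> Gf a m m' + Df a m m' * ((B - zs) - m)"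
    using G_tangent[OF a, of "B - zs" m' m] zz s B0 y pM defs by auto
  have "pay a A C z y \<le> A * (Gf a s s' + Df a s s' * (zs - s)) + C * (Gf a m m' + Df a m m' * ((B - zs) - m))"
    unfolding pay_def using defs t1 t2 \<open>Gf a zm m' \<le> Gf a (B - zs) m'\<close> AC
    by (simp add: add_mono mult_left_mono order_trans)
  also have "\<dots> = pay a A C x y + hh a A C x y * (zs - s)"
  proof -
    have "B = s + m" using full x by simp
    then show ?thesis unfolding pay_def hh_def using defs by (simp add: algebra_simps)
  qed
  also have "\<dots> \<le> pay a A C x y"
  proof -
    have "hh a A C x y * (zs - s) \<le> 0"
    proof (cases "zs \<le> s")
      case True
      show ?thesis
      proof (cases "zs = s")
        case False
        then have "s > B0" using True zz by simp
        then show ?thesis using k1 x True by (simp add: mult_nonneg_nonpos)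
      qed simp
    next
      case False
      then have "m > 0" using full zz x by simp
      then show ?thesis using k2 x False by (simp add: mult_nonpos_nonneg)
    qed
    then show ?thesis by simp
  qed
  finally show "pay a A C z y \<le> pay a A C x y" .
qed

lemma G_deriv_shift:
  assumes "x0 + y > 0"
  shows "((\<lambda>e. Gf a (x0 + c * e) y) has_real_derivative Df a x0 y * c) (at 0)"
proof -
  have "((\<lambda>e. x0 + c * e) has_real_derivative c) (at 0)"
    by (rule derivative_eq_intros refl | simp)+
  from DERIV_chain2[of "\<lambda>x. Gf a x y", OF _ this] G_deriv[OF assms] show ?thesis by simp
qed

lemma BR_full:
  assumes a: "0 < a" "a < 1" and AC: "A > 0" "C > 0" and y: "fst y \<ge> 0" "snd y \<ge> 0"
    and br: "BRg a A C B B0 x y"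
  shows "fst x + snd x = B"
proof (rule ccontr)
  assume ne: "fst x + snd x \<noteq> B"
  obtain s m where x: "x = (s, m)" by force
  have fx: "feasible B B0 x" using br by (simp add: BRg_def)
  then have lt: "m < B - s" "m \<ge> 0" "s \<ge> B0" using ne x by (auto simp: feasible_def)
  have fz: "feasible B B0 (s, B - s)" using lt by (auto simp: feasible_def)
  have "Gf a m (snd y) < Gf a (B - s) (snd y)" using G_strict_mono[OF a lt(2) lt(1) y(2)] .
  then have "pay a A C x y < pay a A C (s, B - s) y" unfolding pay_def using x AC by simp
  moreover have "pay a A C (s, B - s) y \<le> pay a A C x y" using br fz by (simp add: BRg_def)
  ultimately show False by simp
qed

lemma BR_kkt1:
  assumes a: "0 < a" "a < 1" and AC: "A > 0" "C > 0" and y: "fst y \<ge> 0" "snd y \<ge> 0"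
    and br: "BRg a A C B B0 x y"
    and pS: "fst x + fst y > 0" and pM: "snd x + snd y > 0" and m: "snd x > 0"
  shows "hh a A C x y \<le> 0"
proof (rule ccontr)
  assume "\<not> ?thesis"
  then have hpos: "hh a A C x y > 0" by simp
  obtain s m where x: "x = (s, m)" by force
  obtain s' m' where yy: "y = (s', m')" by force
  define f where "f e = A * Gf a (s + 1 * e) s' + C * Gf a (m + (-1) * e) m'" for e
  have "(f has_real_derivative (A * (Df a s s' * 1) + C * (Df a m m' * (-1)))) (at 0)"
    unfolding f_def
    by (intro DERIV_add DERIV_cmult G_deriv_shift) (use pS pM x yy in auto)
  then have d: "(f has_real_derivative hh a A C x y) (at 0)" unfolding hh_def using x yy by simp
  obtain d where d: "d > 0" "\<forall>h>0. h < d \<longrightarrow> f 0 < f (0 + h)"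
    using DERIV_pos_inc_right[OF d hpos] by blast
  define h where "h = min d m / 2"
  have h: "h > 0" "h < d" "h \<le> m" using d m x by (auto simp: h_def)
  have fx: "feasible B B0 x" using br by (simp add: BRg_def)
  then have fz: "feasible B B0 (s + h, m - h)" using x h by (auto simp: feasible_def)
  have "pay a A C (s + h, m - h) y \<le> pay a A C x y" using br fz by (simp add: BRg_def)
  moreover have "pay a A C (s + h, m - h) y = f h" "pay a A C x y = f 0"
    unfolding pay_def f_def using x yy by simp_all
  ultimately show False using d h by force
qed

lemma BR_kkt2:
  assumes a: "0 < a" "a < 1" and AC: "A > 0" "C > 0" and y: "fst y \<ge> 0" "snd y \<ge> 0"
    and br: "BRg a A C B B0 x y"
    and pS: "fst x + fst y > 0" and pM: "snd x + snd y > 0" and s: "fst x > B0"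
  shows "hh a A C x y \<ge> 0"
proof (rule ccontr)
  assume "\<not> ?thesis"
  then have hneg: "hh a A C x y < 0" by simp
  obtain s m where x: "x = (s, m)" by force
  obtain s' m' where yy: "y = (s', m')" by force
  define f where "f e = A * Gf a (s + 1 * e) s' + C * Gf a (m + (-1) * e) m'" for e
  have "(f has_real_derivative (A * (Df a s s' * 1) + C * (Df a m m' * (-1)))) (at 0)"
    unfolding f_def
    by (intro DERIV_add DERIV_cmult G_deriv_shift) (use pS pM x yy in auto)
  then have d: "(f has_real_derivative hh a A C x y) (at 0)" unfolding hh_def using x yy by simp
  obtain d where d: "d > 0" "\<forall>h>0. h < d \<longrightarrow> f 0 < f (0 - h)"
    using DERIV_neg_dec_left[OF d hneg] by blast
  define h where "h = min d (s - B0) / 2"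
  have h: "h > 0" "h < d" "h \<le> s - B0" using d s x by (auto simp: h_def)
  have fx: "feasible B B0 x" using br by (simp add: BRg_def)
  then have fz: "feasible B B0 (s - h, m + h)" using x h by (auto simp: feasible_def)
  have "pay a A C (s - h, m + h) y \<le> pay a A C x y" using br fz by (simp add: BRg_def)
  moreover have "pay a A C (s - h, m + h) y = f (0 - h)" "pay a A C x y = f 0"
    unfolding pay_def f_def using x yy by simp_all
  ultimately show False using d h by force
qed

lemma dev:
  assumes a: "0 < a" "a < 1" and PQ: "P > 0" "Q > 0" and e: "0 < e" "e \<le> m" and m': "m' \<ge> 0"
    and small: "e < (P / Q) powr (1 / a) * (m + m')"
  shows "Q * Gf a m m' < P * Gf a e 0 + Q * Gf a (m - e) m'"
proof -
  define W where "W = m + m'"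
  have W: "W > 0" using e m' W_def by simp
  have "e powr a < ((P / Q) powr (1 / a) * W) powr a"
    using powr_less_mono2[of a e] a e small W_def by simp
  also have "\<dots> = (P / Q) * W powr a"
    using PQ W a by (simp add: powr_mult powr_powr)
  finally have "Q * e powr a < P * W powr a" using PQ by (simp add: field_simps)
  then have key: "Q * W powr (-a) < P * e powr (-a)"
    using W e by (simp add: powr_minus field_simps)
  have g1: "Gf a (m - e) m' \<ge> (m - e) * W powr (-a)"
  proof (cases "m = e")
    case False
    then have "m - e + m' > 0" using e m' by simp
    then have "(m - e + m') powr (-a) \<ge> W powr (-a)"
      using powr_mono2'[of "-a" "m - e + m'" W] a W_def e by simp
    then show ?thesis unfolding Gf_def using e by (simp add: mult_left_mono)
  qed (simp add: Gf_def)
  have g2: "Gf a e 0 = e * e powr (-a)" by (simp add: Gf_def)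
  have g3: "Gf a m m' = m * W powr (-a)" by (simp add: Gf_def W_def)
  have "Q * (e * W powr (-a)) < P * (e * e powr (-a))" using key e
    by (metis mult.left_commute mult_less_cancel_left_pos)
  then show ?thesis using g1 g2 g3 PQ
    by (smt (verit, ccfv_SIG) mult_left_mono right_diff_distrib mult.commute)
qed

lemma BR_deg1:
  assumes a: "0 < a" "a < 1" and AC: "A > 0" "C > 0" and y: "fst y = 0" "snd y \<ge> 0" and B: "B > 0"
    and br: "BRg a A C B B0 x y" and s: "fst x = 0"
  shows False
proof -
  obtain m where x: "x = (0, m)" using s by (metis prod.collapse)
  obtain m' where yy: "y = (0, m')" using y by (metis prod.collapse)
  have full: "m = B" using BR_full[OF a AC _ y(2) br] y x by simp
  have fx: "feasible B B0 x" using br by (simp add: BRg_def)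
  then have B0: "B0 \<le> 0" using x by (simp add: feasible_def)
  define e where "e = min m ((A / C) powr (1 / a) * (m + m')) / 2"
  have pos: "(A / C) powr (1 / a) * (m + m') > 0" using AC full B y yy by simp
  have e: "e > 0" "e \<le> m" "e < (A / C) powr (1 / a) * (m + m')"
    using pos full B by (auto simp: e_def)
  have fz: "feasible B B0 (e, m - e)" using e B0 full by (simp add: feasible_def)
  have "C * Gf a m m' < A * Gf a e 0 + C * Gf a (m - e) m'"
    using dev[OF a AC e(1,2)] e(3) y yy by simp
  then have "pay a A C x y < pay a A C (e, m - e) y" unfolding pay_def using x yy by (simp add: Gf_def)
  moreover have "pay a A C (e, m - e) y \<le> pay a A C x y" using br fz by (simp add: BRg_def)
  ultimately show False by simp
qed

lemma BR_deg2:
  assumes a: "0 < a" "a < 1" and AC: "A > 0" "C > 0" and y: "fst y \<ge> 0" "snd y = 0" and B0: "B0 \<ge> 0"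
    and br: "BRg a A C B B0 x y" and m: "snd x = 0" and s: "fst x > B0"
  shows False
proof -
  obtain s where x: "x = (s, 0)" using m by (metis prod.collapse)
  obtain s' where yy: "y = (s', 0)" using y by (metis prod.collapse)
  define e where "e = min (s - B0) ((C / A) powr (1 / a) * (s + s')) / 2"
  have pos: "(C / A) powr (1 / a) * (s + s') > 0" using AC s B0 y yy x by simp
  have e: "e > 0" "e \<le> s - B0" "e < (C / A) powr (1 / a) * (s + s')"
    using pos s x by (auto simp: e_def)
  have fx: "feasible B B0 x" using br by (simp add: BRg_def)
  then have fz: "feasible B B0 (s - e, e)" using e x by (simp add: feasible_def)
  have "A * Gf a s s' < C * Gf a e 0 + A * Gf a (s - e) s'"
    using dev[OF a AC(2,1) e(1), of s s'] e B0 y yy by simp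
  then have "pay a A C x y < pay a A C (s - e, e) y" unfolding pay_def using x yy by (simp add: Gf_def)
  moreover have "pay a A C (s - e, e) y \<le> pay a A C x y" using br fz by (simp add: BRg_def)
  ultimately show False by simp
qed

lemma Df_repr:
  assumes "s + s' > 0"
  shows "Df a s s' = (s + s') powr (-a) * ((s + s') - a * s) / (s + s')"
  unfolding Df_def powr_m1[OF assms] by (simp add: algebra_simps)

definition NEg :: "real \<Rightarrow> real \<Rightarrow> real \<Rightarrow> real \<Rightarrow> real \<Rightarrow> real \<Rightarrow> real \<Rightarrow> real \<times> real \<Rightarrow> real \<times> real \<Rightarrow> bool" where
  "NEg a A C B1 B2 B10 B20 x1 x2 \<longleftrightarrow> BRg a A C B1 B10 x1 x2 \<and> BRg a A C B2 B20 x2 x1"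

lemma NEg_swap: "NEg a A C B1 B2 B10 B20 x1 x2 = NEg a A C B2 B1 B20 B10 x2 x1"
  unfolding NEg_def by auto

definition KKT :: "real \<Rightarrow> real \<Rightarrow> real \<Rightarrow> real \<Rightarrow> real \<Rightarrow> real \<Rightarrow> real \<Rightarrow> real \<Rightarrow> bool" where
  "KKT a c d S M B0 s m \<longleftrightarrow>
     (s > B0 \<longrightarrow> c * (S - a * s) / S \<ge> d * (M - a * m) / M) \<and>
     (m > 0 \<longrightarrow> c * (S - a * s) / S \<le> d * (M - a * m) / M)"

lemma K_help:
  fixes a c d S M s m :: real
  assumes a: "0 < a" "a < 1" and cd: "c > d" "d > 0" and s: "0 \<le> s" "s \<le> S" and SM: "S > 0" "M > 0"
    and m: "m > 0" and k: "c * (S - a * s) / S \<le> d * (M - a * m) / M"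
  shows "m * S < s * M"
proof -
  have k': "c * (S - a * s) * M \<le> d * (M - a * m) * S" using k SM by (simp add: field_simps)
  have "a * s \<le> s" using a s by (simp add: mult_left_le_one_le)
  then have pos: "S - a * s > 0" using a s SM
    by (metis diff_gt_0_iff_gt less_eq_real_def linorder_not_le mult_le_cancel_right1 order_le_less_trans)
  have "d * ((S - a * s) * M) < c * ((S - a * s) * M)" using cd pos SM by simp
  then have "d * ((S - a * s) * M) < d * ((M - a * m) * S)" using k' by (simp add: algebra_simps)
  then have "(S - a * s) * M < (M - a * m) * S" using cd by simp
  then have "a * (m * S) < a * (s * M)" by (simp add: algebra_simps)
  then show ?thesis using a by simp
qed

lemma K_arith:
  fixes a c d s1 s2 m1 m2 B10 B20 :: real
  assumes a: "0 < a" "a < 1" and nn: "0 \<le> s1" "0 \<le> s2" "0 \<le> m1" "0 \<le> m2"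
    and SM: "s1 + s2 > 0" "m1 + m2 > 0" and cd: "c > 0" "d > 0"
    and k1: "KKT a c d (s1 + s2) (m1 + m2) B10 s1 m1" and k2: "KKT a c d (s1 + s2) (m1 + m2) B20 s2 m2"
  shows "c \<le> d"
proof (rule ccontr)
  assume "\<not> c \<le> d"
  then have cd': "c > d" by simp
  have h1: "m1 * (s1 + s2) \<le> s1 * (m1 + m2)" and h1': "m1 > 0 \<Longrightarrow> m1 * (s1 + s2) < s1 * (m1 + m2)"
  proof -
    show "m1 > 0 \<Longrightarrow> m1 * (s1 + s2) < s1 * (m1 + m2)"
      using K_help[OF a cd' cd(2) nn(1) _ SM] k1 nn unfolding KKT_def by auto
    then show "m1 * (s1 + s2) \<le> s1 * (m1 + m2)" using nn by (cases "m1 > 0") auto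
  qed
  have h2: "m2 * (s1 + s2) \<le> s2 * (m1 + m2)" and h2': "m2 > 0 \<Longrightarrow> m2 * (s1 + s2) < s2 * (m1 + m2)"
  proof -
    show "m2 > 0 \<Longrightarrow> m2 * (s1 + s2) < s2 * (m1 + m2)"
      using K_help[OF a cd' cd(2) nn(2) _ SM] k2 nn unfolding KKT_def by auto
    then show "m2 * (s1 + s2) \<le> s2 * (m1 + m2)" using nn by (cases "m2 > 0") auto
  qed
  have "m1 > 0 \<or> m2 > 0" using SM nn by auto
  then have "m1 * (s1 + s2) + m2 * (s1 + s2) < s1 * (m1 + m2) + s2 * (m1 + m2)"
    using h1 h2 h1' h2' by (meson add_le_less_mono add_less_le_mono)
  then have "(m1 + m2) * (s1 + s2) < (s1 + s2) * (m1 + m2)"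
    by (simp add: distrib_left distrib_right)
  then show False by simp
qed

lemma KKT_norm:
  fixes c d S M s m :: real
  assumes "d > 0" "S > 0" "M > 0"
  shows "(c * (S - a * s) / S \<ge> d * (M - a * m) / M) \<longleftrightarrow> (c / d) * (1 - a * (s / S)) \<ge> 1 - a * (m / M)"
    and "(c * (S - a * s) / S \<le> d * (M - a * m) / M) \<longleftrightarrow> (c / d) * (1 - a * (s / S)) \<le> 1 - a * (m / M)"
  using assms by (simp_all add: field_simps)

lemma U_same:
  fixes a c d S M B0 Bi s m t n :: real
  assumes a: "0 < a" "a < 1" and pos: "c > 0" "d > 0" "S > 0" "M > 0"
    and k1: "KKT a c d S M B0 s m" and k2: "KKT a c d S M B0 t n"
    and f: "s + m = Bi" "t + n = Bi" "s \<ge> B0" "t \<ge> B0" "m \<ge> 0" "n \<ge> 0"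
  shows "s = t"
proof -
  have main: False if lt: "s' < t'" and kk1: "KKT a c d S M B0 s' m'" and kk2: "KKT a c d S M B0 t' n'"
    and ff: "s' + m' = Bi" "t' + n' = Bi" "s' \<ge> B0" "n' \<ge> 0" for s' m' t' n'
  proof -
    have "t' > B0" "m' > 0" using lt ff by auto
    then have i1: "c * (S - a * s') / S \<le> d * (M - a * m') / M"
      and i2: "c * (S - a * t') / S \<ge> d * (M - a * n') / M" using kk1 kk2 unfolding KKT_def by auto
    have "c * (S - a * t') < c * (S - a * s')" using lt a pos by simp
    then have i3: "c * (S - a * t') / S < c * (S - a * s') / S" using pos by (simp add: divide_strict_right_mono)
    have "n' < m'" using lt ff by simp
    then have "d * (M - a * m') < d * (M - a * n')" using a pos by simp
    then have i4: "d * (M - a * m') / M < d * (M - a * n') / M" using pos by (simp add: divide_strict_right_mono)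
    show False using i1 i2 i3 i4 by linarith
  qed
  show ?thesis
  proof (rule linorder_cases[of s t])
    assume "s < t" then show ?thesis using main[of s t m n] k1 k2 f by blast
  next
    assume "t < s" then show ?thesis using main[of t s n m] k1 k2 f by blast
  qed
qed

lemma U_lt:
  fixes a c d c' d' si mi sj mj ti ni tj nj Bi Bj Bi0 Bj0 :: real
  assumes a: "0 < a" "a < 1" and pos: "c > 0" "d > 0" "c' > 0" "d' > 0"
    and bud: "si + mi = Bi" "ti + ni = Bi" "sj + mj = Bj" "tj + nj = Bj"
    and lo: "si \<ge> Bi0" "sj \<ge> Bj0" "ti \<ge> Bi0" "tj \<ge> Bj0" "Bi0 \<ge> 0" "Bj0 \<ge> 0"
    and nn: "mi \<ge> 0" "mj \<ge> 0" "ni \<ge> 0" "nj \<ge> 0"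
    and SM: "si + sj > 0" "mi + mj > 0" "ti + tj > 0" "ni + nj > 0"
    and kxi: "KKT a c d (si + sj) (mi + mj) Bi0 si mi" and kxj: "KKT a c d (si + sj) (mi + mj) Bj0 sj mj"
    and kyi: "KKT a c' d' (ti + tj) (ni + nj) Bi0 ti ni" and kyj: "KKT a c' d' (ti + tj) (ni + nj) Bj0 tj nj"
    and SS: "si + sj < ti + tj" and tsi: "ti > si" and kk: "c' * d < c * d'" and cd: "c \<le> d"
  shows False
proof -
  define S where "S = si + sj"
  define M where "M = mi + mj"
  define S' where "S' = ti + tj"
  define M' where "M' = ni + nj"
  define k where "k = c / d"
  define k' where "k' = c' / d'"
  have Sp: "S > 0" "M > 0" "S' > 0" "M' > 0" using SM by (auto simp: S_def M_def S'_def M'_def)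
  have klt: "k' < k" using kk pos by (simp add: k_def k'_def field_simps)
  have kle: "k \<le> 1" using cd pos by (simp add: k_def)
  have k'pos: "k' > 0" using pos by (simp add: k'_def)
  note N = KKT_norm[OF pos(2) Sp(1) Sp(2)] KKT_norm[OF pos(4) Sp(3) Sp(4)]
  have "c' * (S' - a * ti) / S' \<ge> d' * (M' - a * ni) / M'"
    using kyi tsi lo unfolding KKT_def S'_def M'_def by auto
  then have yi: "k' * (1 - a * (ti / S')) \<ge> 1 - a * (ni / M')"
    using N(3) unfolding k'_def by blast
  have sig1: "ti / S' \<le> 1" "tj / S' \<le> 1" using lo Sp by (auto simp: S'_def)
  have sig0: "ti / S' \<ge> 0" "tj / S' \<ge> 0" using lo Sp by (auto simp: S'_def)
  have pos1: "1 - a * (ti / S') > 0" "1 - a * (tj / S') > 0"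
  proof -
    have "a * (ti / S') \<le> a * 1" "a * (tj / S') \<le> a * 1"
      using sig1 a by (intro mult_left_mono; simp)+
    then show "1 - a * (ti / S') > 0" "1 - a * (tj / S') > 0" using a by auto
  qed
  have sum1: "ti / S' + tj / S' = 1" "ni / M' + nj / M' = 1" using Sp
    by (simp_all add: S'_def M'_def add_divide_distrib[symmetric])
  have below: "t / S' < n / M'" if "k' * (1 - a * (t / S')) \<ge> 1 - a * (n / M')" "1 - a * (t / S') > 0" for t n
  proof -
    have "k' * (1 - a * (t / S')) < 1 * (1 - a * (t / S'))"
      using klt kle that(2) by (intro mult_strict_right_mono) auto
    then have "k' * (1 - a * (t / S')) < 1 - a * (t / S')" by simp
    then have "1 - a * (n / M') < 1 - a * (t / S')" using that(1) by (metis order.strict_trans2 order_le_less_trans)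
    then have "a * (t / S') < a * (n / M')" by simp
    then show ?thesis using a mult_less_cancel_left_pos[of a "t / S'" "n / M'"] by blast
  qed
  have tj: "tj \<le> sj"
  proof (rule ccontr)
    assume "\<not> tj \<le> sj"
    then have "tj > Bj0" using lo by simp
    then have "c' * (S' - a * tj) / S' \<ge> d' * (M' - a * nj) / M'"
      using kyj unfolding KKT_def S'_def M'_def by auto
    then have yj: "k' * (1 - a * (tj / S')) \<ge> 1 - a * (nj / M')"
      using N(3) unfolding k'_def by blast
    have "ti / S' < ni / M'" "tj / S' < nj / M'" using below yi yj pos1 by auto
    then show False using sum1 by linarith
  qed
  have sigma: "ti / S' \<ge> si / S"
  proof -
    have "tj / S' \<le> tj / S" using lo Sp SS by (simp add: S_def S'_def frac_le)
    also have "\<dots> \<le> sj / S" using tj Sp by (simp add: divide_right_mono)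
    finally have "tj / S' \<le> sj / S" .
    moreover have "si / S + sj / S = 1" using Sp by (simp add: S_def add_divide_distrib[symmetric])
    ultimately show ?thesis using sum1 by linarith
  qed
  have MM: "M' < M" using bud SS by (simp add: M_def M'_def)
  have mu: "ni / M' \<le> mi / M"
  proof -
    have "mj \<le> nj" using bud tj by simp
    then have "mj / M \<le> nj / M" using Sp by (simp add: divide_right_mono)
    also have "\<dots> \<le> nj / M'" using nn Sp MM by (simp add: frac_le)
    finally have "mj / M \<le> nj / M'" .
    moreover have "mi / M + mj / M = 1" using Sp by (simp add: M_def add_divide_distrib[symmetric])
    ultimately show ?thesis using sum1 by linarith
  qed
  have "mi > 0" using bud tsi nn by simp
  then have "c * (S - a * si) / S \<le> d * (M - a * mi) / M"
    using kxi unfolding KKT_def S_def M_def by auto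
  then have xi: "k * (1 - a * (si / S)) \<le> 1 - a * (mi / M)"
    using N(2) unfolding k_def by blast
  have c1: "k' * (1 - a * (ti / S')) < k * (1 - a * (ti / S'))"
    using klt pos1 by (simp add: mult_strict_right_mono)
  have c2: "k * (1 - a * (ti / S')) \<le> k * (1 - a * (si / S))"
  proof -
    have "a * (si / S) \<le> a * (ti / S')" using mult_left_mono[OF sigma] a by simp
    then show ?thesis using klt k'pos by (intro mult_left_mono) auto
  qed
  have "a * (ni / M') \<le> a * (mi / M)" using mult_left_mono[OF mu] a by simp
  then have c3: "1 - a * (mi / M) \<le> 1 - a * (ni / M')" by simp
  show False using yi c1 c2 xi c3 by linarith
qed

lemma root_le:
  fixes a k S M Bi :: real
  assumes a: "0 < a" "a < 1" and k: "0 \<le> k" "k \<le> 1 - a" and SM: "S > 0" "M > 0" "M \<le> Bi"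
  shows "(k - 1 + a * Bi / M) / (a * (k / S + 1 / M)) \<le> Bi - M"
proof -
  have D: "a * (k / S + 1 / M) > 0" using a k SM by (simp add: add_nonneg_pos)
  have eq: "a * (k / S + 1 / M) * (Bi - M) - (k - 1 + a * Bi / M) = a * k * (Bi - M) / S + (1 - a - k)"
    using SM by (simp add: field_simps)
  have "a * k * (Bi - M) / S \<ge> 0" using a k SM by simp
  then have "k - 1 + a * Bi / M \<le> a * (k / S + 1 / M) * (Bi - M)"
    using eq k by linarith
  then show ?thesis using D by (simp add: divide_le_eq mult.commute)
qed

lemma hh_lin:
  fixes a k dd S M Bi s :: real
  assumes "S > 0" "M > 0" "a > 0" "k \<ge> 0"
  shows "(k * dd) * (S - a * s) / S - dd * (M - a * (Bi - s)) / M
       = dd * (a * (k / S + 1 / M)) * ((k - 1 + a * Bi / M) / (a * (k / S + 1 / M)) - s)"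
proof -
  define D where "D = a * (k / S + 1 / M)"
  have "D > 0" using assms by (simp add: add_nonneg_pos D_def)
  then have "dd * D * ((k - 1 + a * Bi / M) / D - s) = dd * ((k - 1 + a * Bi / M) - D * s)"
    by (simp add: field_simps)
  also have "\<dots> = (k * dd) * (S - a * s) / S - dd * (M - a * (Bi - s)) / M"
    using assms by (simp add: D_def field_simps)
  finally show ?thesis unfolding D_def by simp
qed

lemma clamp:
  fixes B0 Bi rt :: real
  assumes "B0 \<le> Bi"
  shows "B0 \<le> max B0 (min Bi rt)" "max B0 (min Bi rt) \<le> Bi"
    "max B0 (min Bi rt) > B0 \<Longrightarrow> max B0 (min Bi rt) \<le> rt"
    "max B0 (min Bi rt) < Bi \<Longrightarrow> max B0 (min Bi rt) \<ge> rt"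
  using assms by auto

locale gm =
  fixes a A C B1 B2 B10 B20 :: real
  assumes a: "0 < a" "a < 1" and AC: "A > 0" "C > 0" and B: "B1 > 0" "B2 > 0"
    and B0: "0 \<le> B10" "B10 \<le> B1" "0 \<le> B20" "B20 \<le> B2"
begin

lemma swap: "gm a A C B2 B1 B20 B10"
  using a AC B B0 by unfold_locales auto

lemma hh_repr:
  assumes "fst x + fst y > 0" "snd x + snd y > 0"
  shows "hh a A C x y = (A * (fst x + fst y) powr (-a)) * ((fst x + fst y) - a * fst x) / (fst x + fst y)
     - (C * (snd x + snd y) powr (-a)) * ((snd x + snd y) - a * snd x) / (snd x + snd y)"
  unfolding hh_def Df_repr[OF assms(1)] Df_repr[OF assms(2)] by simp

lemma NE_struct:
  assumes ne: "NEg a A C B1 B2 B10 B20 (s1, m1) (s2, m2)"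
  shows "(B10 = B1 \<and> B20 = B2 \<and> s1 = B1 \<and> m1 = 0 \<and> s2 = B2 \<and> m2 = 0) \<or>
    (s1 + s2 > 0 \<and> m1 + m2 > 0 \<and> s1 + m1 = B1 \<and> s2 + m2 = B2 \<and>
     s1 \<ge> B10 \<and> s2 \<ge> B20 \<and> m1 \<ge> 0 \<and> m2 \<ge> 0 \<and>
     KKT a (A * (s1 + s2) powr (-a)) (C * (m1 + m2) powr (-a)) (s1 + s2) (m1 + m2) B10 s1 m1 \<and>
     KKT a (A * (s1 + s2) powr (-a)) (C * (m1 + m2) powr (-a)) (s1 + s2) (m1 + m2) B20 s2 m2)"
proof -
  have br1: "BRg a A C B1 B10 (s1, m1) (s2, m2)" and br2: "BRg a A C B2 B20 (s2, m2) (s1, m1)"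
    using ne by (auto simp: NEg_def)
  have f1: "s1 \<ge> B10" "m1 \<ge> 0" and f2: "s2 \<ge> B20" "m2 \<ge> 0"
    using br1 br2 by (auto simp: BRg_def feasible_def)
  have y1: "fst (s2, m2) \<ge> 0" "snd (s2, m2) \<ge> 0" using f2 B0 by auto
  have y2: "fst (s1, m1) \<ge> 0" "snd (s1, m1) \<ge> 0" using f1 B0 by auto
  have full1: "s1 + m1 = B1" using BR_full[OF a AC y1 br1] by simp
  have full2: "s2 + m2 = B2" using BR_full[OF a AC y2 br2] by simp
  show ?thesis
  proof (cases "s1 + s2 = 0")
    case True
    then have "s1 = 0" "s2 = 0" using f1 f2 B0 by auto
    then show ?thesis using BR_deg1[OF a AC _ _ B(1) br1] f2 by simp
  next
    case S: False
    show ?thesis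
    proof (cases "m1 + m2 = 0")
      case True
      then have m: "m1 = 0" "m2 = 0" using f1 f2 by auto
      have "\<not> s1 > B10" using BR_deg2[OF a AC _ _ B0(1) br1] m y1 by auto
      moreover have "\<not> s2 > B20" using BR_deg2[OF a AC _ _ B0(3) br2] m y2 by auto
      ultimately show ?thesis using m f1 f2 full1 full2 by auto
    next
      case M: False
      have Sp: "s1 + s2 > 0" using S f1 f2 B0 by auto
      have Mp: "m1 + m2 > 0" using M f1 f2 by auto
      have Sp2: "s2 + s1 > 0" and Mp2: "m2 + m1 > 0" using Sp Mp by auto
      have k1: "KKT a (A * (s1 + s2) powr (-a)) (C * (m1 + m2) powr (-a)) (s1 + s2) (m1 + m2) B10 s1 m1"
        unfolding KKT_def
        using BR_kkt1[OF a AC y1 br1] BR_kkt2[OF a AC y1 br1] hh_repr[of "(s1, m1)" "(s2, m2)"] Sp Mp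
        by auto
      have k2: "KKT a (A * (s1 + s2) powr (-a)) (C * (m1 + m2) powr (-a)) (s1 + s2) (m1 + m2) B20 s2 m2"
        unfolding KKT_def
        using BR_kkt1[OF a AC y2 br2] BR_kkt2[OF a AC y2 br2] hh_repr[of "(s2, m2)" "(s1, m1)"] Sp2 Mp2
        by (auto simp: add.commute)
      show ?thesis using Sp Mp full1 full2 f1 f2 k1 k2 by auto
    qed
  qed
qed

definition nd :: "real \<Rightarrow> real \<Rightarrow> real \<Rightarrow> real \<Rightarrow> bool" where
  "nd s1 m1 s2 m2 \<longleftrightarrow> (s1 + s2 > 0 \<and> m1 + m2 > 0 \<and> s1 + m1 = B1 \<and> s2 + m2 = B2 \<and>
     s1 \<ge> B10 \<and> s2 \<ge> B20 \<and> m1 \<ge> 0 \<and> m2 \<ge> 0 \<and>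
     KKT a (A * (s1 + s2) powr (-a)) (C * (m1 + m2) powr (-a)) (s1 + s2) (m1 + m2) B10 s1 m1 \<and>
     KKT a (A * (s1 + s2) powr (-a)) (C * (m1 + m2) powr (-a)) (s1 + s2) (m1 + m2) B20 s2 m2)"

lemma nd_cd:
  assumes "nd s1 m1 s2 m2"
  shows "A * (s1 + s2) powr (-a) \<le> C * (m1 + m2) powr (-a)"
proof -
  have h: "s1 + s2 > 0" "m1 + m2 > 0" "s1 \<ge> B10" "s2 \<ge> B20" "m1 \<ge> 0" "m2 \<ge> 0"
     "KKT a (A * (s1 + s2) powr (-a)) (C * (m1 + m2) powr (-a)) (s1 + s2) (m1 + m2) B10 s1 m1"
     "KKT a (A * (s1 + s2) powr (-a)) (C * (m1 + m2) powr (-a)) (s1 + s2) (m1 + m2) B20 s2 m2"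
    using assms unfolding nd_def by blast+
  have nn: "0 \<le> s1" "0 \<le> s2" using h B0 by linarith+
  have cd: "A * (s1 + s2) powr (-a) > 0" "C * (m1 + m2) powr (-a) > 0" using AC h by simp_all
  show ?thesis by (rule K_arith[OF a nn h(5,6) h(1,2) cd h(7,8)])
qed

lemma NE_K:
  assumes ne: "NEg a A C B1 B2 B10 B20 (s1, m1) (s2, m2)"
  shows "A * (m1 + m2) powr a \<le> C * (s1 + s2) powr a"
  using NE_struct[OF ne]
proof
  assume "B10 = B1 \<and> B20 = B2 \<and> s1 = B1 \<and> m1 = 0 \<and> s2 = B2 \<and> m2 = 0"
  then show ?thesis using AC by simp
next
  assume h0: "s1 + s2 > 0 \<and> m1 + m2 > 0 \<and> s1 + m1 = B1 \<and> s2 + m2 = B2 \<and>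
     s1 \<ge> B10 \<and> s2 \<ge> B20 \<and> m1 \<ge> 0 \<and> m2 \<ge> 0 \<and>
     KKT a (A * (s1 + s2) powr (-a)) (C * (m1 + m2) powr (-a)) (s1 + s2) (m1 + m2) B10 s1 m1 \<and>
     KKT a (A * (s1 + s2) powr (-a)) (C * (m1 + m2) powr (-a)) (s1 + s2) (m1 + m2) B20 s2 m2"
  then have h: "nd s1 m1 s2 m2" unfolding nd_def .
  have cd: "A * (s1 + s2) powr (-a) \<le> C * (m1 + m2) powr (-a)" using nd_cd[OF h] .
  have p: "(s1 + s2) powr a > 0" "(m1 + m2) powr a > 0" using h by (auto simp: nd_def)
  show ?thesis using cd p by (simp add: powr_minus field_simps)
qed

lemma nd_lt:
  assumes x: "nd s1 m1 s2 m2" and y: "nd t1 n1 t2 n2" and lt: "s1 + s2 < t1 + t2"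
  shows False
proof -
  define c where "c = A * (s1 + s2) powr (-a)"
  define d where "d = C * (m1 + m2) powr (-a)"
  define c' where "c' = A * (t1 + t2) powr (-a)"
  define d' where "d' = C * (n1 + n2) powr (-a)"
  have xx: "s1 + s2 > 0" "m1 + m2 > 0" "s1 + m1 = B1" "s2 + m2 = B2" "s1 \<ge> B10" "s2 \<ge> B20"
    "m1 \<ge> 0" "m2 \<ge> 0" "KKT a c d (s1 + s2) (m1 + m2) B10 s1 m1" "KKT a c d (s1 + s2) (m1 + m2) B20 s2 m2"
    using x unfolding nd_def c_def d_def by blast+
  have yy: "t1 + t2 > 0" "n1 + n2 > 0" "t1 + n1 = B1" "t2 + n2 = B2" "t1 \<ge> B10" "t2 \<ge> B20"
    "n1 \<ge> 0" "n2 \<ge> 0" "KKT a c' d' (t1 + t2) (n1 + n2) B10 t1 n1" "KKT a c' d' (t1 + t2) (n1 + n2) B20 t2 n2"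
    using y unfolding nd_def c'_def d'_def by blast+
  have pos: "c > 0" "d > 0" "c' > 0" "d' > 0" using xx yy AC by (auto simp: c_def d_def c'_def d'_def)
  have cc: "c' < c" unfolding c_def c'_def using AC xx lt a
    by (intro mult_strict_left_mono powr_less_mono2_neg) auto
  have Mlt: "n1 + n2 < m1 + m2" using xx yy lt by linarith
  have dd: "d < d'" unfolding d_def d'_def using AC yy Mlt a
    by (intro mult_strict_left_mono powr_less_mono2_neg) auto
  have "c' * d < c * d" using cc pos by simp
  also have "\<dots> < c * d'" using dd pos by simp
  finally have kk: "c' * d < c * d'" .
  have cd: "c \<le> d" using nd_cd[OF x] unfolding c_def d_def .
  show False
  proof (cases "t1 > s1")
    case True
    show False
      by (rule U_lt[OF a pos xx(3) yy(3) xx(4) yy(4) xx(5) xx(6) yy(5) yy(6) B0(1) B0(3)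
            xx(7) xx(8) yy(7) yy(8) xx(1) xx(2) yy(1) yy(2) xx(9) xx(10) yy(9) yy(10) lt True kk cd])
  next
    case False
    then have t2: "t2 > s2" using lt by linarith
    have e: "s2 + s1 = s1 + s2" "m2 + m1 = m1 + m2" "t2 + t1 = t1 + t2" "n2 + n1 = n1 + n2" by auto
    show False
      by (rule U_lt[OF a pos xx(4) yy(4) xx(3) yy(3) xx(6) xx(5) yy(6) yy(5) B0(3) B0(1)
            xx(8) xx(7) yy(8) yy(7), unfolded e, OF xx(1) xx(2) yy(1) yy(2) xx(10) xx(9) yy(10) yy(9) lt t2 kk cd])
  qed
qed

lemma NE_unique:
  assumes x: "NEg a A C B1 B2 B10 B20 (s1, m1) (s2, m2)" and y: "NEg a A C B1 B2 B10 B20 (t1, n1) (t2, n2)"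
  shows "s1 = t1 \<and> m1 = n1 \<and> s2 = t2 \<and> m2 = n2"
proof -
  have sx: "(B10 = B1 \<and> B20 = B2 \<and> s1 = B1 \<and> m1 = 0 \<and> s2 = B2 \<and> m2 = 0) \<or> nd s1 m1 s2 m2"
    using NE_struct[OF x] unfolding nd_def .
  have sy: "(B10 = B1 \<and> B20 = B2 \<and> t1 = B1 \<and> n1 = 0 \<and> t2 = B2 \<and> n2 = 0) \<or> nd t1 n1 t2 n2"
    using NE_struct[OF y] unfolding nd_def .
  show ?thesis
  proof (cases "B10 = B1 \<and> B20 = B2")
    case True
    have "\<not> nd u1 v1 u2 v2" for u1 v1 u2 v2
    proof
      assume "nd u1 v1 u2 v2"
      then have "u1 + u2 > 0" "v1 + v2 > 0" "u1 + v1 = B1" "u2 + v2 = B2" "u1 \<ge> B10" "u2 \<ge> B20"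
        "v1 \<ge> 0" "v2 \<ge> 0" unfolding nd_def by blast+
      then show False using True by linarith
    qed
    then show ?thesis using sx sy by auto
  next
    case False
    then have ndx: "nd s1 m1 s2 m2" and ndy: "nd t1 n1 t2 n2" using sx sy by auto
    have eqS: "s1 + s2 = t1 + t2"
      using nd_lt[OF ndx ndy] nd_lt[OF ndy ndx] by (meson linorder_neqE_linordered_idom)
    define c where "c = A * (s1 + s2) powr (-a)"
    define d where "d = C * (m1 + m2) powr (-a)"
    have xx: "s1 + s2 > 0" "m1 + m2 > 0" "s1 + m1 = B1" "s2 + m2 = B2" "s1 \<ge> B10" "s2 \<ge> B20"
      "m1 \<ge> 0" "m2 \<ge> 0" "KKT a c d (s1 + s2) (m1 + m2) B10 s1 m1" "KKT a c d (s1 + s2) (m1 + m2) B20 s2 m2"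
      using ndx unfolding nd_def c_def d_def by blast+
    have "t1 + n1 = B1" "t2 + n2 = B2" using ndy unfolding nd_def by blast+
    then have eqM: "n1 + n2 = m1 + m2" using xx eqS by linarith
    have yy: "t1 + n1 = B1" "t2 + n2 = B2" "t1 \<ge> B10" "t2 \<ge> B20"
      "n1 \<ge> 0" "n2 \<ge> 0" "KKT a c d (s1 + s2) (m1 + m2) B10 t1 n1" "KKT a c d (s1 + s2) (m1 + m2) B20 t2 n2"
      using ndy unfolding nd_def c_def d_def eqS eqM by blast+
    have pos: "c > 0" "d > 0" using xx AC by (auto simp: c_def d_def)
    have "s1 = t1" by (rule U_same[OF a pos xx(1,2) xx(9) yy(7) xx(3) yy(1) xx(5) yy(3) xx(7) yy(5)])
    moreover have "s2 = t2" by (rule U_same[OF a pos xx(1,2) xx(10) yy(8) xx(4) yy(2) xx(6) yy(4) xx(8) yy(6)])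
    ultimately show ?thesis using xx yy by auto
  qed
qed

lemma NE_exists_deg:
  assumes "B10 = B1" "B20 = B2"
  shows "NEg a A C B1 B2 B10 B20 (B1, 0) (B2, 0)"
proof -
  have f: "feasible Bi Bi z \<Longrightarrow> z = (Bi, 0)" for Bi z by (cases z) (auto simp: feasible_def)
  show ?thesis unfolding NEg_def BRg_def using assms f by (auto simp: feasible_def)
qed

lemma NE_exists_nd:
  assumes nd: "B10 + B20 < B1 + B2"
  shows "\<exists>s1 m1 s2 m2. NEg a A C B1 B2 B10 B20 (s1, m1) (s2, m2)"
proof -
  define B where "B = B1 + B2"
  have Bp: "B > 0" using B by (simp add: B_def)
  define kap where "kap = (A / C) powr (1 / a)"
  have kap: "kap > 0" using AC by (simp add: kap_def)
  have kapa: "kap powr a = A / C" using AC a by (simp add: kap_def powr_powr)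
  define Ss where "Ss = kap * B / (1 + kap)"
  define kf where "kf S = (A * S powr (-a)) / (C * (B - S) powr (-a))" for S
  define rt where "rt Bi S = (kf S - 1 + a * Bi / (B - S)) / (a * (kf S / S + 1 / (B - S)))" for Bi S
  define r where "r Bi Bi0 S = max Bi0 (min Bi (rt Bi S))" for Bi Bi0 S
  define F where "F S = r B1 B10 S + r B2 B20 S - S" for S
  have MSs: "B - Ss = B / (1 + kap)" using kap by (simp add: Ss_def field_simps)
  have Ss: "0 < Ss" "Ss < B" using kap Bp by (auto simp: Ss_def field_simps)
  have SsM: "Ss = kap * (B - Ss)" unfolding MSs using kap by (simp add: Ss_def)
  have kfSs: "kf Ss = 1"
  proof -
    have "Ss powr (-a) = kap powr (-a) * (B - Ss) powr (-a)"
      using kap Ss by (subst SsM) (simp add: powr_mult)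
    also have "kap powr (-a) = C / A" using kapa AC kap by (simp add: powr_minus)
    finally have "A * Ss powr (-a) = C * (B - Ss) powr (-a)" using AC by simp
    then show ?thesis using AC Ss by (simp add: kf_def)
  qed
  have rtSs: "rt Bi Ss = Bi * kap / (1 + kap)" for Bi
  proof -
    have "rt Bi Ss = (a * Bi / (B - Ss)) / (a * (1 / Ss + 1 / (B - Ss)))" by (simp add: rt_def kfSs)
    also have "\<dots> = Bi * Ss / (B - Ss + Ss)" using a Ss by (simp add: field_simps)
    also have "\<dots> = Bi * kap / (1 + kap)" using kap Bp by (simp add: Ss_def)
    finally show ?thesis .
  qed
  have F1: "F Ss \<ge> 0"
  proof -
    have "rt Bi Ss \<le> Bi" if "Bi > 0" for Bi using kap that by (simp add: rtSs field_simps)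
    then have "r B1 B10 Ss \<ge> rt B1 Ss" "r B2 B20 Ss \<ge> rt B2 Ss" using B by (auto simp: r_def)
    moreover have "rt B1 Ss + rt B2 Ss = (B1 + B2) * kap / (1 + kap)"
      unfolding rtSs by (simp add: add_divide_distrib[symmetric] ring_distribs)
    then have "rt B1 Ss + rt B2 Ss = Ss" by (simp add: Ss_def B_def)
    ultimately show ?thesis by (simp add: F_def)
  qed
  define q where "q = ((1 - a) * C / A) powr (1 / a)"
  have q: "q > 0" using a AC by (simp add: q_def)
  have qa: "q powr a = (1 - a) * C / A" using a AC by (simp add: q_def powr_powr)
  define Bh where "Bh = B / 2"
  define Bq where "Bq = B / 2 * q"
  have BhBq: "Bh > 0" "Bq > 0" using Bp q by (auto simp: Bh_def Bq_def)
  define Mb where "Mb = min B1 (min B2 (min (B - B10 - B20) (min (B - Ss) (min Bh Bq))))"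
  have Mb0: "Mb > 0" "Mb \<le> B1" "Mb \<le> B2" "Mb \<le> B - B10 - B20" "Mb \<le> B - Ss" "Mb \<le> Bh" "Mb \<le> Bq"
    using B nd Ss BhBq unfolding Mb_def B_def by (simp_all add: min_def)
  then have Mb: "Mb > 0" "Mb \<le> B1" "Mb \<le> B2" "Mb \<le> B - B10 - B20" "Mb \<le> B - Ss" "Mb \<le> B / 2" "Mb \<le> B / 2 * q"
    unfolding Bh_def Bq_def by auto
  define b where "b = B - Mb"
  have b: "Ss \<le> b" "b < B" "b \<ge> B / 2" "b > 0" using Mb Bp by (auto simp: b_def)
  have BbM: "B - b = Mb" by (simp add: b_def)
  have kfb_eq: "kf b = (A / C) * (Mb / b) powr a"
    using b Mb AC unfolding kf_def BbM by (simp add: powr_minus powr_divide field_simps)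
  have kfb: "kf b \<le> 1 - a" "kf b \<ge> 0"
  proof -
    have "Mb / b \<le> Mb / (B / 2)" using b Mb by (intro divide_left_mono) auto
    also have "\<dots> \<le> q" using Mb Bp by (simp add: field_simps)
    finally have "(Mb / b) powr a \<le> q powr a" using Mb b a by (intro powr_mono2) auto
    then have "(A / C) * (Mb / b) powr a \<le> (A / C) * ((1 - a) * C / A)"
      using qa AC by (intro mult_left_mono) auto
    then show "kf b \<le> 1 - a" using AC by (simp add: kfb_eq)
    show "kf b \<ge> 0" using AC by (simp add: kfb_eq)
  qed
  have Fb: "F b \<le> 0"
  proof -
    have "rt Bi b \<le> Bi - Mb" if "Mb \<le> Bi" for Bi
      unfolding rt_def using root_le[OF a kfb(2) kfb(1) b(4), of Mb Bi] Mb that by (simp add: b_def)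
    then have "rt B1 b \<le> B1 - Mb" "rt B2 b \<le> B2 - Mb" using Mb by auto
    then have "r B1 B10 b \<le> max B10 (B1 - Mb)" "r B2 B20 b \<le> max B20 (B2 - Mb)"
      unfolding r_def by auto
    then show ?thesis using Mb B0 by (simp add: F_def b_def B_def)
  qed
  have h1: "x > 0" "x \<noteq> 0" "B - x > 0" "B - x \<noteq> 0" if "x \<in> {Ss..b}" for x
    using that Ss b by auto
  have h2: "C * (B - x) powr - a \<noteq> 0" if "x \<in> {Ss..b}" for x using h1[OF that] AC by simp
  have h3: "a * (A * x powr - a / (C * (B - x) powr - a) / x + 1 / (B - x)) \<noteq> 0" if "x \<in> {Ss..b}" for x
  proof -
    have "A * x powr - a / (C * (B - x) powr - a) / x \<ge> 0" using h1[OF that] AC by simp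
    moreover have "1 / (B - x) > 0" using h1[OF that] by simp
    ultimately show ?thesis using a by (smt (verit) mult_pos_pos)
  qed
  have cont: "continuous_on {Ss..b} F"
    unfolding F_def r_def rt_def kf_def
    by (intro continuous_intros) (use h1 h2 h3 in blast)+
  obtain S0 where S0: "Ss \<le> S0" "S0 \<le> b" "F S0 = 0"
    using IVT2'[of F b 0 Ss] Fb F1 b cont by auto
  have S0p: "S0 > 0" "B - S0 > 0" using S0 Ss b by auto
  define r1 where "r1 = r B1 B10 S0"
  define r2 where "r2 = r B2 B20 S0"
  have rsum: "r1 + r2 = S0" using S0 by (simp add: F_def r1_def r2_def)
  have br: "BRg a A C Bi Bi0 (r Bi Bi0 S0, Bi - r Bi Bi0 S0) (rj, Bj - rj)"
    if hs: "r Bi Bi0 S0 + rj = S0" "Bi + Bj = B" "0 \<le> Bi0" "Bi0 \<le> Bi" "Bj0 \<le> rj" "rj \<le> Bj" "0 \<le> Bj0"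
    for Bi Bi0 Bj Bj0 rj
  proof -
    define ri where "ri = r Bi Bi0 S0"
    have cl: "Bi0 \<le> ri" "ri \<le> Bi" "ri > Bi0 \<Longrightarrow> ri \<le> rt Bi S0" "ri < Bi \<Longrightarrow> ri \<ge> rt Bi S0"
      using clamp[OF hs(4), of "rt Bi S0"] unfolding ri_def r_def by auto
    have sums: "fst (ri, Bi - ri) + fst (rj, Bj - rj) = S0" "snd (ri, Bi - ri) + snd (rj, Bj - rj) = B - S0"
      using hs unfolding ri_def by auto
    define dd where "dd = C * (B - S0) powr (-a)"
    have dd: "dd > 0" using AC S0p by (simp add: dd_def)
    have kf0: "kf S0 \<ge> 0" using AC S0p by (simp add: kf_def)
    have "kf S0 = A * S0 powr (-a) / dd" by (simp add: kf_def dd_def)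
    then have cS: "A * S0 powr (-a) = kf S0 * dd" using dd by simp
    have hh: "hh a A C (ri, Bi - ri) (rj, Bj - rj) = dd * (a * (kf S0 / S0 + 1 / (B - S0))) * (rt Bi S0 - ri)"
    proof -
      have "hh a A C (ri, Bi - ri) (rj, Bj - rj) = (kf S0 * dd) * (S0 - a * ri) / S0 - dd * ((B - S0) - a * (Bi - ri)) / (B - S0)"
        using hh_repr[of "(ri, Bi - ri)" "(rj, Bj - rj)"] sums S0p by (simp add: cS dd_def)
      also have "\<dots> = dd * (a * (kf S0 / S0 + 1 / (B - S0))) * (rt Bi S0 - ri)"
        unfolding rt_def by (rule hh_lin[OF S0p a(1) kf0])
      finally show ?thesis .
    qed
    have D: "dd * (a * (kf S0 / S0 + 1 / (B - S0))) > 0" using dd a kf0 S0p by (simp add: add_nonneg_pos)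
    show ?thesis unfolding ri_def[symmetric]
    proof (rule BR_opt[OF a AC _ _ hs(3)])
      show "fst (rj, Bj - rj) \<ge> 0" "snd (rj, Bj - rj) \<ge> 0" using hs by auto
      show "feasible Bi Bi0 (ri, Bi - ri)" using cl by (simp add: feasible_def)
      show "fst (ri, Bi - ri) + snd (ri, Bi - ri) = Bi" by simp
      show "fst (ri, Bi - ri) + fst (rj, Bj - rj) > 0" "snd (ri, Bi - ri) + snd (rj, Bj - rj) > 0"
        using sums S0p by auto
      show "hh a A C (ri, Bi - ri) (rj, Bj - rj) \<ge> 0" if "fst (ri, Bi - ri) > Bi0"
        using cl(3) that D unfolding hh by simp
      show "hh a A C (ri, Bi - ri) (rj, Bj - rj) \<le> 0" if "snd (ri, Bi - ri) > 0"
        using cl(4) that D unfolding hh by (simp add: mult_nonneg_nonpos)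
    qed
  qed
  have c1: "B20 \<le> r2" "r2 \<le> B2" "B10 \<le> r1" "r1 \<le> B1"
    using clamp[OF B0(4)] clamp[OF B0(2)] by (auto simp: r1_def r2_def r_def)
  have "BRg a A C B1 B10 (r1, B1 - r1) (r2, B2 - r2)"
    using br[of B1 B10 r2 B2 B20] rsum c1 B0 by (simp add: B_def r1_def)
  moreover have "BRg a A C B2 B20 (r2, B2 - r2) (r1, B1 - r1)"
    using br[of B2 B20 r1 B1 B10] rsum c1 B0 by (simp add: B_def r2_def add.commute)
  ultimately show ?thesis unfolding NEg_def by blast
qed

end

lemma rev_pay:
  assumes "R0 > 0" "lamS > 0" "Nm > 0" "Nf > 0"
    and "fst x \<ge> 0" "fst y \<ge> 0" "snd x \<ge> 0" "snd y \<ge> 0"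
  shows "revenue R0 lamS Nm Nf \<alpha> x y =
    pay \<alpha> (lamS * R0 * (lamS * R0 / Nf) powr (-\<alpha>)) (R0 * (R0 / Nm) powr (-\<alpha>)) x y"
proof -
  have e1: "lamS * (fst x + fst y) * R0 / Nf = (lamS * R0 / Nf) * (fst x + fst y)" by simp
  have e2: "(snd x + snd y) * R0 / Nm = (R0 / Nm) * (snd x + snd y)" by simp
  have p1: "(lamS * (fst x + fst y) * R0 / Nf) powr (-\<alpha>) = (lamS * R0 / Nf) powr (-\<alpha>) * (fst x + fst y) powr (-\<alpha>)"
    unfolding e1 by (rule powr_mult)
  have p2: "((snd x + snd y) * R0 / Nm) powr (-\<alpha>) = (R0 / Nm) powr (-\<alpha>) * (snd x + snd y) powr (-\<alpha>)"
    unfolding e2 by (rule powr_mult)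
  show ?thesis
    unfolding revenue_def pay_def Gf_def uprime_def Let_def p1 p2 by (simp add: algebra_simps)
qed

lemma isNE_NEg:
  assumes "R0 > 0" "lamS > 0" "Nm > 0" "Nf > 0" "0 \<le> B10" "0 \<le> B20"
  shows "is_NE R0 lamS Nm Nf \<alpha> B1 B2 B10 B20 x1 x2 \<longleftrightarrow>
    NEg \<alpha> (lamS * R0 * (lamS * R0 / Nf) powr (-\<alpha>)) (R0 * (R0 / Nm) powr (-\<alpha>)) B1 B2 B10 B20 x1 x2"
proof -
  have nn: "feasible B B0 z \<Longrightarrow> 0 \<le> B0 \<Longrightarrow> fst z \<ge> 0 \<and> snd z \<ge> 0" for B B0 z
    by (auto simp: feasible_def)
  show ?thesis
    unfolding is_NE_def NEg_def BRg_def
    using rev_pay[OF assms(1-4)] nn assms(5,6) by (metis (no_types, lifting))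
qed

lemma AC_ident:
  fixes R0 lamS Nm Nf \<alpha> :: real
  assumes "R0 > 0" "lamS > 0" "Nm > 0" "Nf > 0" "\<alpha> > 0"
  shows "(lamS * R0 * (lamS * R0 / Nf) powr (-\<alpha>)) * Nm powr \<alpha> =
    (R0 * (R0 / Nm) powr (-\<alpha>)) * (Nf * lamS powr (1 / \<alpha> - 1)) powr \<alpha>"
proof -
  have l: "(lamS powr (1 / \<alpha> - 1)) powr \<alpha> = lamS powr (1 - \<alpha>)"
  proof -
    have "(1 / \<alpha> - 1) * \<alpha> = 1 - \<alpha>" using assms by (simp add: field_simps)
    then show ?thesis by (simp add: powr_powr)
  qed
  have l2: "lamS * lamS powr (-\<alpha>) = lamS powr (1 - \<alpha>)"
    using assms by (simp add: powr_diff powr_minus divide_inverse)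
  have a1: "(lamS * R0 / Nf) powr (-\<alpha>) = lamS powr (-\<alpha>) * R0 powr (-\<alpha>) * Nf powr \<alpha>"
    using assms by (simp add: powr_divide powr_mult powr_minus field_simps)
  have a2: "(R0 / Nm) powr (-\<alpha>) = R0 powr (-\<alpha>) * Nm powr \<alpha>"
    using assms by (simp add: powr_divide powr_minus field_simps)
  have a3: "(Nf * lamS powr (1 / \<alpha> - 1)) powr \<alpha> = Nf powr \<alpha> * lamS powr (1 - \<alpha>)"
    using assms by (simp add: powr_mult l)
  show ?thesis unfolding a1 a2 a3 l2[symmetric] by (simp add: algebra_simps)
qed


theorem theorem2:
  fixes R0 lamS Nm Nf \<alpha> B1 B2 B10 B20 :: real
  assumes "R0 > 0" and "lamS > 1" and "Nm > 0" and "Nf > 0"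
    and "0 < \<alpha>" and "\<alpha> < 1"
    and "B1 > 0" and "B2 > 0"
    and "0 \<le> B10" and "B10 \<le> B1" and "0 \<le> B20" and "B20 \<le> B2"
  shows "(\<exists>!p. is_NE R0 lamS Nm Nf \<alpha> B1 B2 B10 B20 (fst p) (snd p)) \<and>
         (\<forall>x1 x2. is_NE R0 lamS Nm Nf \<alpha> B1 B2 B10 B20 x1 x2 \<longrightarrow>
            fst x1 + fst x2 \<ge>
              Nf * lamS powr (1 / \<alpha> - 1) * B1 / (Nf * lamS powr (1 / \<alpha> - 1) + Nm)
            + Nf * lamS powr (1 / \<alpha> - 1) * B2 / (Nf * lamS powr (1 / \<alpha> - 1) + Nm))"
proof -
  define A where "A = lamS * R0 * (lamS * R0 / Nf) powr (-\<alpha>)"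
  define C where "C = R0 * (R0 / Nm) powr (-\<alpha>)"
  have lam0: "lamS > 0" using assms by simp
  have AC: "A > 0" "C > 0" using assms by (auto simp: A_def C_def)
  interpret g: gm \<alpha> A C B1 B2 B10 B20
    by unfold_locales (use assms AC in auto)
  have eq: "is_NE R0 lamS Nm Nf \<alpha> B1 B2 B10 B20 x1 x2 \<longleftrightarrow> NEg \<alpha> A C B1 B2 B10 B20 x1 x2" for x1 x2
    using isNE_NEg[OF assms(1) lam0 assms(3,4,9,11)] by (simp add: A_def C_def)
  have ex: "\<exists>x1 x2. NEg \<alpha> A C B1 B2 B10 B20 x1 x2"
  proof (cases "B10 = B1 \<and> B20 = B2")
    case True
    then show ?thesis using g.NE_exists_deg by blast
  next
    case False
    then have "B10 + B20 < B1 + B2" using assms by linarith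
    then show ?thesis using g.NE_exists_nd by blast
  qed
  have un: "x1 = y1 \<and> x2 = y2" if "NEg \<alpha> A C B1 B2 B10 B20 x1 x2" "NEg \<alpha> A C B1 B2 B10 B20 y1 y2"
    for x1 x2 y1 y2
  proof -
    obtain s1 m1 s2 m2 t1 n1 t2 n2 where "x1 = (s1, m1)" "x2 = (s2, m2)" "y1 = (t1, n1)" "y2 = (t2, n2)"
      by (metis prod.collapse)
    then show ?thesis using g.NE_unique that by auto
  qed
  have P1: "\<exists>!p. is_NE R0 lamS Nm Nf \<alpha> B1 B2 B10 B20 (fst p) (snd p)"
  proof -
    obtain x1 x2 where x: "NEg \<alpha> A C B1 B2 B10 B20 x1 x2" using ex by blast
    show ?thesis
    proof (rule ex1I[of _ "(x1, x2)"])
      show "is_NE R0 lamS Nm Nf \<alpha> B1 B2 B10 B20 (fst (x1, x2)) (snd (x1, x2))" using x eq by simp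
      fix p assume "is_NE R0 lamS Nm Nf \<alpha> B1 B2 B10 B20 (fst p) (snd p)"
      then have "NEg \<alpha> A C B1 B2 B10 B20 (fst p) (snd p)" using eq by simp
      then show "p = (x1, x2)" using un[OF _ x] by (metis prod.collapse)
    qed
  qed
  have P2: "fst x1 + fst x2 \<ge>
              Nf * lamS powr (1 / \<alpha> - 1) * B1 / (Nf * lamS powr (1 / \<alpha> - 1) + Nm)
            + Nf * lamS powr (1 / \<alpha> - 1) * B2 / (Nf * lamS powr (1 / \<alpha> - 1) + Nm)"
    if ne0: "is_NE R0 lamS Nm Nf \<alpha> B1 B2 B10 B20 x1 x2" for x1 x2
  proof -
    obtain s1 m1 s2 m2 where xs: "x1 = (s1, m1)" "x2 = (s2, m2)" by (metis prod.collapse)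
    have ne: "NEg \<alpha> A C B1 B2 B10 B20 (s1, m1) (s2, m2)" using ne0 eq xs by simp
    have K: "A * (m1 + m2) powr \<alpha> \<le> C * (s1 + s2) powr \<alpha>" using g.NE_K[OF ne] .
    have st: "s1 + m1 = B1" "s2 + m2 = B2" "s1 \<ge> 0" "s2 \<ge> 0" "m1 \<ge> 0" "m2 \<ge> 0"
      using g.NE_struct[OF ne] assms by auto
    define N where "N = Nf * lamS powr (1 / \<alpha> - 1)"
    have Np: "N > 0" using assms by (simp add: N_def)
    define S where "S = s1 + s2"
    define M where "M = m1 + m2"
    have SM: "S \<ge> 0" "M \<ge> 0" "S + M = B1 + B2" using st by (auto simp: S_def M_def)
    have id: "A * Nm powr \<alpha> = C * N powr \<alpha>"
      unfolding A_def C_def N_def by (rule AC_ident) (use assms in auto)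
    have key: "N * M \<le> Nm * S"
    proof (rule ccontr)
      assume "\<not> ?thesis"
      then have lt: "Nm * S < N * M" by simp
      have "(Nm * S) powr \<alpha> < (N * M) powr \<alpha>"
        using powr_less_mono2[OF assms(5) _ lt] SM assms by simp
      then have "Nm powr \<alpha> * S powr \<alpha> < N powr \<alpha> * M powr \<alpha>" by (simp add: powr_mult)
      then have "A * (Nm powr \<alpha> * S powr \<alpha>) < A * (N powr \<alpha> * M powr \<alpha>)" using AC by simp
      moreover have "A * (Nm powr \<alpha> * S powr \<alpha>) = C * N powr \<alpha> * S powr \<alpha>"
        using id by (metis mult.assoc)
      ultimately have "C * N powr \<alpha> * S powr \<alpha> < N powr \<alpha> * (A * M powr \<alpha>)"
        by (simp add: algebra_simps)
      then have "N powr \<alpha> * (C * S powr \<alpha>) < N powr \<alpha> * (A * M powr \<alpha>)" by (simp add: algebra_simps)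
      then have "C * S powr \<alpha> < A * M powr \<alpha>" using Np by simp
      then show False using K by (simp add: S_def M_def)
    qed
    have "N * B1 / (N + Nm) + N * B2 / (N + Nm) = N * (S + M) / (N + Nm)"
      using SM by (simp add: add_divide_distrib[symmetric] algebra_simps)
    also have "\<dots> \<le> S" using key Np assms by (simp add: field_simps)
    finally show ?thesis unfolding N_def S_def using xs by simp
  qed
  show ?thesis using P1 P2 by blast
qed

end
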